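(* Let $h\in\mathcal H$, $k_0=k_0(h)$, $k_f=k_f(h)$. Then $$k_0\le \operatorname{hdepth}(h)\le \min\{k_f,\ k_0+c(h)\}.$$
   Context: $\mathcal H$ denotes the set of nonzero functions $h:\mathbb Z\to\mathbb Z_{\ge 0}$ such that $h(j)=0$ for all sufficiently negative $j$. For $h\in\mathcal H$ and integers $k\le d$, set $\beta_k^d(h)=\sum_{j\le k}(-1)^{k-j}\binom{d-j}{k-j}h(j)$, and $\operatorname{hdepth}(h)=\max\{d\in\mathbb Z:\ \beta_k^d(h)\ge 0\text{ for all integers }k\le d\}$. Further $k_0(h)=\min\{j: h(j)>0\}$; $k_f(h)=\min\{j\ge k_0(h): h(j+1)=0\}$, with $k_f(h)=+\infty$ if no such $j$ exists; and $c(h)=\left\lfloor h(k_0(h)+1)/h(k_0(h))\right\rfloor$. *)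

theory Defs
  imports Complex_Main "HOL-Library.Extended_Real"
begin

definition inH :: "(int \<Rightarrow> nat) \<Rightarrow> bool" where
  "inH h \<longleftrightarrow> h \<noteq> (\<lambda>_. 0) \<and> (\<exists>N. \<forall>j\<le>N. h j = 0)"

text \<open>beta_k^d(h) = sum_{j<=k} (-1)^(k-j) binom(d-j,k-j) h(j); only finitely many terms are
  nonzero for h in H, so we sum over the (finite) set of such indices.\<close>
definition beta :: "int \<Rightarrow> int \<Rightarrow> (int \<Rightarrow> nat) \<Rightarrow> int" where
  "beta k d h = (\<Sum>j\<in>{j. j \<le> k \<and> h j \<noteq> 0}.
      (-1) ^ nat (k - j) * int (nat (d - j) choose nat (k - j)) * int (h j))"

definition hdepth :: "(int \<Rightarrow> nat) \<Rightarrow> int" where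
  "hdepth h = (GREATEST d. \<forall>k. k \<le> d \<longrightarrow> beta k d h \<ge> 0)"

definition k0 :: "(int \<Rightarrow> nat) \<Rightarrow> int" where
  "k0 h = (LEAST j. h j > 0)"

definition kf :: "(int \<Rightarrow> nat) \<Rightarrow> ereal" where
  "kf h = (if \<exists>j\<ge>k0 h. h (j + 1) = 0
           then ereal (of_int (LEAST j. j \<ge> k0 h \<and> h (j + 1) = 0))
           else \<infinity>)"

definition cH :: "(int \<Rightarrow> nat) \<Rightarrow> int" where
  "cH h = \<lfloor>real (h (k0 h + 1)) / real (h (k0 h))\<rfloor>"

end

theory Submission
  imports Defs
begin

lemma int_least_ex:
  fixes P :: "int \<Rightarrow> bool"
  assumes ex: "P x" and lb: "\<And>y. P y \<Longrightarrow> b \<le> y"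
  shows "P (Least P) \<and> (\<forall>y. P y \<longrightarrow> Least P \<le> y)"
proof -
  define n where "n = (LEAST n::nat. P (b + int n))"
  have x: "P (b + int (nat (x - b)))" using ex lb[OF ex] by simp
  have Pn: "P (b + int n)" unfolding n_def by (rule LeastI, rule x)
  have mn: "\<forall>y. P y \<longrightarrow> b + int n \<le> y"
  proof (intro allI impI)
    fix y assume "P y"
    hence "P (b + int (nat (y - b)))" using lb[of y] by simp
    hence "n \<le> nat (y - b)" unfolding n_def by (rule Least_le)
    thus "b + int n \<le> y" using lb[OF \<open>P y\<close>] by linarith
  qed
  have "Least P = b + int n"
    by (rule Least_equality) (use Pn mn in auto)
  thus ?thesis using Pn mn by simp
qed

lemma k0_props:
  assumes "inH h"
  shows "h (k0 h) > 0 \<and> (\<forall>j. h j > 0 \<longrightarrow> k0 h \<le> j)"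
proof -
  from assms obtain N where N: "\<forall>j\<le>N. h j = 0" and nz: "h \<noteq> (\<lambda>_. 0)" unfolding inH_def by blast
  from nz obtain x where "h x > 0" by auto
  moreover have "\<And>y. h y > 0 \<Longrightarrow> N + 1 \<le> y" by (rule ccontr) (use N in auto)
  ultimately show ?thesis unfolding k0_def using int_least_ex[of "\<lambda>j. h j > 0" x "N+1"] by blast
qed

definition tt :: "(int \<Rightarrow> nat) \<Rightarrow> int \<Rightarrow> int \<Rightarrow> int \<Rightarrow> int" where
  "tt h d k j = (-1) ^ nat (k - j) * int (nat (d - j) choose nat (k - j)) * int (h j)"

lemma beta_sum:
  assumes "inH h"
  shows "beta k d h = (\<Sum>j\<in>{k0 h..k}. tt h d k j)"
proof -
  have "(\<Sum>j\<in>{k0 h..k}. tt h d k j) = (\<Sum>j\<in>{j\<in>{k0 h..k}. h j \<noteq> 0}. tt h d k j)"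
    by (rule sum.mono_neutral_right) (auto simp: tt_def)
  also have "{j\<in>{k0 h..k}. h j \<noteq> 0} = {j. j \<le> k \<and> h j \<noteq> 0}"
    using k0_props[OF assms] by auto
  finally show ?thesis unfolding beta_def tt_def by simp
qed

lemma beta_low: "inH h \<Longrightarrow> k < k0 h \<Longrightarrow> beta k d h = 0"
  by (simp add: beta_sum)

lemma split_top: "a \<le> k \<Longrightarrow> {a..k::int} = insert k {a..k-1}" by auto

lemma pascal:
  assumes H: "inH h" and kd: "k \<le> d"
  shows "beta k d h = beta k (d-1) h - beta (k-1) (d-1) h"
proof (cases "k < k0 h")
  case True thus ?thesis using H by (simp add: beta_low)
next
  case False
  hence s: "{k0 h..k} = insert k {k0 h..k-1}" by (simp add: split_top)
  have t: "tt h d k j = tt h (d-1) k j - tt h (d-1) (k-1) j" if j: "j \<le> k - 1" for j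
  proof -
    define n where "n = nat (d - j)"
    define r where "r = nat (k - j)"
    have n1: "n > 0" "r > 0" using j kd by (auto simp: n_def r_def)
    have e: "nat (d - 1 - j) = n - 1" "nat (k - 1 - j) = r - 1" by (auto simp: n_def r_def)
    have sg: "(-1::int) ^ r = - ((-1) ^ (r - 1))" using n1
      by (cases r) auto
    have "tt h d k j = (-1)^r * int (((n - 1) choose (r - 1)) + ((n - 1) choose r)) * int (h j)"
      unfolding tt_def n_def[symmetric] r_def[symmetric] using choose_reduce_nat[OF n1] by simp
    also have "\<dots> = (-1)^r * int ((n - 1) choose r) * int (h j) - (-1)^(r-1) * int ((n - 1) choose (r-1)) * int (h j)"
      using sg by (simp add: algebra_simps)
    also have "\<dots> = tt h (d-1) k j - tt h (d-1) (k-1) j"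
      unfolding tt_def e r_def[symmetric] n_def[symmetric] by simp
    finally show ?thesis .
  qed
  have "beta k d h = (\<Sum>j\<in>{k0 h..k-1}. tt h d k j) + tt h d k k"
    using H by (simp add: beta_sum s add.commute)
  also have "(\<Sum>j\<in>{k0 h..k-1}. tt h d k j) = (\<Sum>j\<in>{k0 h..k-1}. tt h (d-1) k j) - beta (k-1) (d-1) h"
    using H t by (simp add: beta_sum sum_subtractf)
  also have "tt h d k k = tt h (d-1) k k" by (simp add: tt_def)
  also have "beta k (d-1) h = (\<Sum>j\<in>{k0 h..k-1}. tt h (d-1) k j) + tt h (d-1) k k"
    using H by (simp add: beta_sum s add.commute)
  ultimately show ?thesis by simp
qed


definition PP :: "(int \<Rightarrow> nat) \<Rightarrow> int \<Rightarrow> bool" where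
  "PP h d \<longleftrightarrow> (\<forall>k. k \<le> d \<longrightarrow> beta k d h \<ge> 0)"

lemma PP_down1:
  assumes H: "inH h" and P: "PP h d"
  shows "PP h (d-1)"
  unfolding PP_def
proof (intro allI impI)
  fix k assume kd: "k \<le> d - 1"
  show "beta k (d-1) h \<ge> 0"
  proof (cases "k < k0 h")
    case True thus ?thesis using H by (simp add: beta_low)
  next
    case False
    hence "k0 h - 1 \<le> k" by simp
    thus ?thesis using kd
    proof (induction k rule: int_ge_induct)
      case base thus ?case using H by (simp add: beta_low)
    next
      case (step i)
      have "beta (i+1) d h = beta (i+1) (d-1) h - beta i (d-1) h"
        using pascal[OF H, of "i+1" d] step.prems by simp
      moreover have "beta (i+1) d h \<ge> 0" using P step.prems unfolding PP_def by simp
      moreover have "beta i (d-1) h \<ge> 0" using step.IH step.prems by simp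
      ultimately show ?case by simp
    qed
  qed
qed

lemma PP_down:
  assumes H: "inH h" and P: "PP h d" and le: "d' \<le> d"
  shows "PP h d'"
  using le
proof (induction d' rule: int_le_induct)
  case base thus ?case using P .
next
  case (step i) thus ?case using PP_down1[OF H] by blast
qed

lemma PP_k0: assumes H: "inH h" shows "PP h (k0 h)"
  unfolding PP_def
proof (intro allI impI)
  fix k assume "k \<le> k0 h"
  then consider "k < k0 h" | "k = k0 h" by linarith
  thus "beta k (k0 h) h \<ge> 0"
    by cases (use H in \<open>auto simp: beta_low beta_sum tt_def\<close>)
qed

lemma cH_nonneg: "cH h \<ge> 0"
  unfolding cH_def by simp

lemma PP_bound_c:
  assumes H: "inH h" and P: "PP h d"
  shows "d \<le> k0 h + cH h"
proof (cases "d \<le> k0 h")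
  case True thus ?thesis using cH_nonneg[of h] by simp
next
  case False
  define a where "a = k0 h"
  have pos: "h a > 0" using k0_props[OF H] a_def by simp
  have s: "{a..a+1} = {a, a+1}" by auto
  have "beta (a+1) d h = tt h d (a+1) a + tt h d (a+1) (a+1)"
    using H by (simp add: beta_sum a_def[symmetric] s)
  also have "\<dots> = int (h (a+1)) - (d - a) * int (h a)"
    using False by (simp add: tt_def a_def algebra_simps)
  finally have "int (h (a+1)) - (d - a) * int (h a) \<ge> 0"
    using P False unfolding PP_def a_def by (metis a_def linorder_not_le zless_imp_add1_zle)
  hence "real_of_int (d - a) * real (h a) \<le> real (h (a+1))"
    by (metis of_int_le_iff of_int_mult of_int_of_nat_eq diff_ge_0_iff_ge)
  hence "real_of_int (d - a) \<le> real (h (a+1)) / real (h a)"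
    using pos by (simp add: pos_le_divide_eq)
  hence "d - a \<le> cH h" unfolding cH_def a_def[symmetric] by (simp add: le_floor_iff)
  thus ?thesis by (simp add: a_def)
qed

lemma PP_bound_f:
  assumes H: "inH h" and P: "PP h d" and f: "f \<ge> k0 h" "h (f+1) = 0"
  shows "d \<le> f"
proof (rule ccontr)
  assume "\<not> d \<le> f"
  hence P1: "PP h (f+1)" using PP_down[OF H P] by simp
  define a where "a = k0 h"
  have pos: "h a > 0" using k0_props[OF H] a_def by simp
  have mono: "beta k f h \<ge> int (h a)" if "a \<le> k" "k \<le> f + 1" for k
    using that
  proof (induction k rule: int_ge_induct)
    case base
    have "{a..a} = {a}" by auto
    thus ?case using H f by (simp add: beta_sum a_def[symmetric] tt_def)
  next
    case (step i)
    have "beta (i+1) (f+1) h = beta (i+1) f h - beta i f h"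
      using pascal[OF H, of "i+1" "f+1"] step.prems by simp
    moreover have "beta (i+1) (f+1) h \<ge> 0" using P1 step.prems unfolding PP_def by simp
    ultimately show ?case using step.IH step.prems by simp
  qed
  have "beta (f+1) f h = 0"
    unfolding beta_sum[OF H]
  proof (rule sum.neutral, intro ballI)
    fix j assume "j \<in> {k0 h..f+1}"
    then consider "j \<le> f" | "j = f + 1" by fastforce
    thus "tt h f (f+1) j = 0"
    proof cases
      case 1
      hence "nat (f - j) < nat (f + 1 - j)" by simp
      thus ?thesis by (simp add: tt_def binomial_eq_0)
    next
      case 2 thus ?thesis using f by (simp add: tt_def)
    qed
  qed
  moreover have "beta (f+1) f h \<ge> int (h a)" using mono[of "f+1"] f a_def by simp
  ultimately show False using pos by simp
qed

lemma hdepth_eq: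
  assumes H: "inH h"
  shows "PP h (hdepth h) \<and> (\<forall>d. PP h d \<longrightarrow> d \<le> hdepth h)"
proof -
  define b where "b = k0 h + cH h"
  define n where "n = (GREATEST n::nat. PP h (k0 h + int n))"
  have bnd: "\<And>y. PP h (k0 h + int y) \<Longrightarrow> y \<le> nat (cH h)"
    using PP_bound_c[OF H] by fastforce
  have Pn: "PP h (k0 h + int n)" unfolding n_def
    by (rule GreatestI_nat[of _ 0]) (use PP_k0[OF H] bnd in auto)
  have mx: "\<forall>d. PP h d \<longrightarrow> d \<le> k0 h + int n"
  proof (intro allI impI)
    fix d assume Pd: "PP h d"
    show "d \<le> k0 h + int n"
    proof (cases "d \<le> k0 h")
      case True thus ?thesis by simp
    next
      case False
      hence "PP h (k0 h + int (nat (d - k0 h)))" using Pd by simp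
      hence "nat (d - k0 h) \<le> n" unfolding n_def
        by (rule Greatest_le_nat) (use bnd in auto)
      thus ?thesis by linarith
    qed
  qed
  have "hdepth h = k0 h + int n"
    unfolding hdepth_def PP_def[symmetric]
    by (rule Greatest_equality) (use Pn mx in auto)
  thus ?thesis using Pn mx by simp
qed

theorem proposition1p5:
  fixes h :: "int \<Rightarrow> nat"
  assumes "inH h"
  shows "k0 h \<le> hdepth h \<and>
         ereal (of_int (hdepth h)) \<le> min (kf h) (ereal (of_int (k0 h + cH h)))"
proof -
  note hd = hdepth_eq[OF assms]
  have 1: "k0 h \<le> hdepth h" using hd PP_k0[OF assms] by blast
  have 2: "hdepth h \<le> k0 h + cH h" using hd PP_bound_c[OF assms] by blast
  have 3: "ereal (of_int (hdepth h)) \<le> kf h"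
  proof (cases "\<exists>j\<ge>k0 h. h (j + 1) = 0")
    case True
    then obtain x where x: "x \<ge> k0 h" "h (x+1) = 0" by blast
    define L where "L = (LEAST j. j \<ge> k0 h \<and> h (j + 1) = 0)"
    have "L \<ge> k0 h \<and> h (L+1) = 0"
      using int_least_ex[of "\<lambda>j. j \<ge> k0 h \<and> h (j + 1) = 0" x "k0 h"] x unfolding L_def by blast
    hence "hdepth h \<le> L" using hd PP_bound_f[OF assms] by blast
    thus ?thesis using True unfolding kf_def L_def[symmetric] by simp
  next
    case False thus ?thesis unfolding kf_def by (simp only: if_False) simp
  qed
  show ?thesis using 1 2 3 by simp
qed

end
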